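(* Let $A$ be a simple infinite-dimensional unital $C^*$-algebra which is not purely infinite, and let $x\in A_+\setminus\{0\}$. Then for every $\varepsilon>0$ there is $y\in (\overline{xAx})_+\setminus\{0\}$ such that whenever $f\in A$ satisfies $0\le f\le 1$ and $1-f\precsim y$, one has $\|f\|>1-\varepsilon$.
   Context: For positive elements $a,b$ of a $C^*$-algebra $A$, $a\precsim b$ (Cuntz subequivalence) means there is a sequence $(v_n)$ in $A$ with $\|a-v_nbv_n^*\|\to 0$. A simple unital $C^*$-algebra $A$ is purely infinite if it is infinite-dimensional and for every non-zero $a\in A$ there are $x,y\in A$ with $xay=1$. $\overline{xAx}$ denotes the hereditary subalgebra (norm closure of $xAx$). *)

theory Defs
  imports "HOL-Analysis.Analysis"
begin

class cstar_algebra_1 = real_normed_algebra_1 + banach +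
  fixes scaleC :: "complex \<Rightarrow> 'a \<Rightarrow> 'a"
    and cstar :: "'a \<Rightarrow> 'a"
  assumes scaleC_add_right: "scaleC c (x + y) = scaleC c x + scaleC c y"
    and scaleC_add_left: "scaleC (c + d) x = scaleC c x + scaleC d x"
    and scaleC_scaleC: "scaleC c (scaleC d x) = scaleC (c * d) x"
    and scaleC_of_real: "scaleC (complex_of_real r) x = scaleR r x"
    and norm_scaleC: "norm (scaleC c x) = cmod c * norm x"
    and mult_scaleC_left: "scaleC c x * y = scaleC c (x * y)"
    and mult_scaleC_right: "x * scaleC c y = scaleC c (x * y)"
    and cstar_add: "cstar (x + y) = cstar x + cstar y"
    and cstar_scaleC: "cstar (scaleC c x) = scaleC (cnj c) (cstar x)"
    and cstar_mult: "cstar (x * y) = cstar y * cstar x"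
    and cstar_cstar: "cstar (cstar x) = x"
    and cstar_identity: "norm (cstar x * x) = (norm x)\<^sup>2"

definition invertible_elem :: "'a::cstar_algebra_1 \<Rightarrow> bool" where
  "invertible_elem a \<longleftrightarrow> (\<exists>b. a * b = 1 \<and> b * a = 1)"

definition cspectrum :: "'a::cstar_algebra_1 \<Rightarrow> complex set" where
  "cspectrum a = {z. \<not> invertible_elem (a - scaleC z 1)}"

definition positive :: "'a::cstar_algebra_1 \<Rightarrow> bool" where
  "positive a \<longleftrightarrow> cstar a = a \<and> (\<forall>z\<in>cspectrum a. Im z = 0 \<and> Re z \<ge> 0)"

definition cuntz_le :: "'a::cstar_algebra_1 \<Rightarrow> 'a \<Rightarrow> bool" where
  "cuntz_le a b \<longleftrightarrow> (\<exists>v::nat \<Rightarrow> 'a. (\<lambda>n. norm (a - v n * b * cstar (v n))) \<longlonglongrightarrow> 0)"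

definition closed_ideal :: "'a::cstar_algebra_1 set \<Rightarrow> bool" where
  "closed_ideal I \<longleftrightarrow> closed I \<and> 0 \<in> I \<and>
     (\<forall>x\<in>I. \<forall>y\<in>I. x + y \<in> I) \<and> (\<forall>c. \<forall>x\<in>I. scaleC c x \<in> I) \<and>
     (\<forall>x\<in>I. \<forall>a. a * x \<in> I \<and> x * a \<in> I)"

definition simple_alg :: "'a::cstar_algebra_1 itself \<Rightarrow> bool" where
  "simple_alg _ \<longleftrightarrow> (\<forall>I::'a set. closed_ideal I \<longrightarrow> I = {0} \<or> I = UNIV)"

definition finite_dim_alg :: "'a::cstar_algebra_1 itself \<Rightarrow> bool" where
  "finite_dim_alg _ \<longleftrightarrow> (\<exists>S::'a set. finite S \<and>
      (\<forall>x::'a. \<exists>c. x = (\<Sum>s\<in>S. scaleC (c s) s)))"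

definition purely_infinite :: "'a::cstar_algebra_1 itself \<Rightarrow> bool" where
  "purely_infinite T \<longleftrightarrow> \<not> finite_dim_alg T \<and>
     (\<forall>a::'a. a \<noteq> 0 \<longrightarrow> (\<exists>x y. x * a * y = 1))"

definition hered :: "'a::cstar_algebra_1 \<Rightarrow> 'a set" where
  "hered x = closure {x * a * x | a. True}"

end

theory Submission
  imports Defs
begin

lemma neumann:
  fixes d :: "'a::{real_normed_algebra_1,banach}"
  assumes "norm d < 1"
  shows "\<exists>s. (1 - d) * s = 1 \<and> s * (1 - d) = 1"
proof -
  have sm: "summable (\<lambda>n. d ^ n)" by (rule complete_algebra_summable_geometric[OF assms])
  define S where "S = (\<Sum>n. d ^ n)"
  have h: "(\<Sum>n. d ^ Suc n) = S - 1"
    using suminf_split_head[OF sm] by (simp add: S_def)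
  have l: "d * S = S - 1"
    using suminf_mult[OF sm, of d] h by (simp add: S_def)
  have r: "S * d = S - 1"
    using suminf_mult2[OF sm, of d] h by (simp add: S_def power_commutes)
  have "(1 - d) * S = 1" using l by (simp add: algebra_simps)
  moreover have "S * (1 - d) = 1" using r by (simp add: algebra_simps)
  ultimately show ?thesis by blast
qed


lemma scaleC_zero_left[simp]: "scaleC 0 (x::'a::cstar_algebra_1) = 0"
  using scaleC_of_real[of 0 x] by simp

lemma scaleC_one[simp]: "scaleC 1 (x::'a::cstar_algebra_1) = x"
  using scaleC_of_real[of 1 x] by simp

lemma scaleC_zero_right[simp]: "scaleC c (0::'a::cstar_algebra_1) = 0"
  using scaleC_add_right[of c 0 0] by simp

lemma scaleC_minus_left: "scaleC (- c) (x::'a::cstar_algebra_1) = - scaleC c x"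
  using scaleC_add_left[of c "-c" x] by (simp add: eq_neg_iff_add_eq_0 add.commute)

lemma scaleC_minus_right: "scaleC c (- (x::'a::cstar_algebra_1)) = - scaleC c x"
  using scaleC_add_right[of c x "-x"] by (simp add: eq_neg_iff_add_eq_0 add.commute)

lemma scaleC_diff_left: "scaleC (c - d) (x::'a::cstar_algebra_1) = scaleC c x - scaleC d x"
  using scaleC_add_left[of c "-d" x] by (simp add: scaleC_minus_left)

lemma scaleC_diff_right: "scaleC c ((x::'a::cstar_algebra_1) - y) = scaleC c x - scaleC c y"
  using scaleC_add_right[of c x "-y"] by (simp add: scaleC_minus_right)

lemma scaleC_1_mult: "scaleC c 1 * (y::'a::cstar_algebra_1) = scaleC c y"
  by (simp add: mult_scaleC_left)

lemma mult_scaleC_1: "(y::'a::cstar_algebra_1) * scaleC c 1 = scaleC c y"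
  by (simp add: mult_scaleC_right)

lemma cstar_zero[simp]: "cstar (0::'a::cstar_algebra_1) = 0"
  using cstar_add[of 0 0] by simp

lemma cstar_minus: "cstar (- (x::'a::cstar_algebra_1)) = - cstar x"
  using cstar_add[of x "-x"] by (simp add: eq_neg_iff_add_eq_0 add.commute)

lemma cstar_diff: "cstar ((x::'a::cstar_algebra_1) - y) = cstar x - cstar y"
  using cstar_add[of x "-y"] by (simp add: cstar_minus)

lemma cstar_one[simp]: "cstar (1::'a::cstar_algebra_1) = 1"
proof -
  have "cstar (1::'a) = cstar 1 * cstar (cstar (1::'a))"
    using cstar_cstar[of "1::'a"] by simp
  also have "\<dots> = cstar (cstar 1 * (1::'a))" by (simp only: cstar_mult)
  also have "\<dots> = 1" using cstar_cstar[of "1::'a"] by simp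
  finally show ?thesis .
qed

lemma cstar_eq_0: "cstar (x::'a::cstar_algebra_1) = 0 \<longleftrightarrow> x = 0"
  by (metis cstar_cstar cstar_zero)


lemma inv_mult:
  fixes u w :: "'a::cstar_algebra_1"
  assumes "invertible_elem u" "invertible_elem w"
  shows "invertible_elem (u * w)"
proof -
  obtain u' where u: "u * u' = 1" "u' * u = 1" using assms(1) unfolding invertible_elem_def by blast
  obtain w' where w: "w * w' = 1" "w' * w = 1" using assms(2) unfolding invertible_elem_def by blast
  have "u * w * (w' * u') = 1" by (metis u(1) w(1) mult.assoc mult_1_left)
  moreover have "(w' * u') * (u * w) = 1" by (metis u(2) w(2) mult.assoc mult_1_left)
  ultimately show ?thesis unfolding invertible_elem_def by blast
qed

lemma inv_scaleC:
  fixes u :: "'a::cstar_algebra_1"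
  assumes "invertible_elem u" "c \<noteq> 0"
  shows "invertible_elem (scaleC c u)"
proof -
  obtain u' where u: "u * u' = 1" "u' * u = 1" using assms(1) unfolding invertible_elem_def by blast
  have "scaleC c u * scaleC (1/c) u' = 1"
    using assms(2) by (simp add: mult_scaleC_left mult_scaleC_right scaleC_scaleC u)
  moreover have "scaleC (1/c) u' * scaleC c u = 1"
    using assms(2) by (simp add: mult_scaleC_left mult_scaleC_right scaleC_scaleC u)
  ultimately show ?thesis unfolding invertible_elem_def by blast
qed

lemma spec_bound:
  fixes a :: "'a::cstar_algebra_1"
  assumes "z \<in> cspectrum a"
  shows "cmod z \<le> norm a"
proof (rule ccontr)
  assume "\<not> cmod z \<le> norm a"
  hence lt: "norm a < cmod z" by simp
  hence z0: "z \<noteq> 0" by (metis norm_ge_zero norm_zero not_less)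
  define d where "d = scaleC (1/z) a"
  have "norm d = norm a / cmod z" by (simp add: d_def norm_scaleC norm_divide)
  also have "\<dots> < 1" using lt z0 by simp
  finally have "norm d < 1" .
  from neumann[OF this] have "invertible_elem (1 - d)" unfolding invertible_elem_def by blast
  hence "invertible_elem (scaleC (-z) (1 - d))" using z0 by (intro inv_scaleC) auto
  moreover have "scaleC (-z) (1 - d) = a - scaleC z 1"
    using z0 by (simp add: d_def scaleC_diff_right scaleC_scaleC scaleC_minus_left)
  ultimately show False using assms unfolding cspectrum_def by simp
qed

lemma sa_spec_real:
  fixes h :: "'a::cstar_algebra_1"
  assumes sa: "cstar h = h" and z: "z \<in> cspectrum h"
  shows "Im z = 0"
proof (rule ccontr)
  assume b0: "Im z \<noteq> 0"
  define t where "t = ((norm h)\<^sup>2 + 1) / (2 * Im z)"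
  define k where "k = h + scaleC (\<i> * of_real t) 1"
  have "k - scaleC (z + \<i> * of_real t) 1 = h - scaleC z 1"
    by (simp add: k_def scaleC_add_left)
  hence "z + \<i> * of_real t \<in> cspectrum k" using z unfolding cspectrum_def by simp
  hence m: "cmod (z + \<i> * of_real t) \<le> norm k" by (rule spec_bound)
  have ck: "cstar k = h + scaleC (- (\<i> * of_real t)) 1"
    by (simp add: k_def cstar_add cstar_scaleC sa)
  have "cstar k * k = h * h + (scaleC (\<i> * of_real t) h + scaleC (- (\<i> * of_real t)) h)
      + scaleC ((\<i> * of_real t) * - (\<i> * of_real t)) 1"
  proof -
    have "cstar k * k = (h + scaleC (- (\<i> * of_real t)) 1) * (h + scaleC (\<i> * of_real t) 1)"
      using ck k_def by simp
    also have "\<dots> = h * h + h * scaleC (\<i> * of_real t) 1 + scaleC (- (\<i> * of_real t)) 1 * h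
       + scaleC (- (\<i> * of_real t)) 1 * scaleC (\<i> * of_real t) 1"
      by (simp add: distrib_left distrib_right add.assoc)
    also have "\<dots> = h * h + (scaleC (\<i> * of_real t) h + scaleC (- (\<i> * of_real t)) h)
      + scaleC ((\<i> * of_real t) * - (\<i> * of_real t)) 1"
      by (simp only: scaleC_1_mult mult_scaleC_1 scaleC_scaleC add.assoc)
    finally show ?thesis .
  qed
  also have "scaleC (\<i> * of_real t) h + scaleC (- (\<i> * of_real t)) h = 0"
    by (simp add: scaleC_minus_left)
  also have "(\<i> * of_real t) * - (\<i> * of_real t) = complex_of_real (t\<^sup>2)"
    by (simp add: power2_eq_square algebra_simps)
  finally have "cstar k * k = h * h + scaleR (t\<^sup>2) 1" by (simp only: scaleC_of_real add_0_right)
  hence "norm (cstar k * k) \<le> norm (h * h) + t\<^sup>2"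
    by (metis norm_triangle_ineq norm_scaleR norm_one mult_1_right abs_of_nonneg zero_le_power2)
  also have "norm (h * h) \<le> (norm h)\<^sup>2" by (simp add: power2_eq_square norm_mult_ineq)
  finally have nk: "(norm k)\<^sup>2 \<le> (norm h)\<^sup>2 + t\<^sup>2" by (simp add: cstar_identity)
  have "(cmod (z + \<i> * of_real t))\<^sup>2 \<le> (norm k)\<^sup>2"
    using m by (simp add: power_mono)
  moreover have "(cmod (z + \<i> * of_real t))\<^sup>2 = (Re z)\<^sup>2 + (Im z + t)\<^sup>2"
    by (simp add: cmod_power2)
  ultimately have "(Re z)\<^sup>2 + (Im z + t)\<^sup>2 \<le> (norm h)\<^sup>2 + t\<^sup>2" using nk by linarith
  hence "(Re z)\<^sup>2 + (Im z)\<^sup>2 + 2 * Im z * t \<le> (norm h)\<^sup>2" by (simp add: power2_eq_square algebra_simps)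
  moreover have "2 * Im z * t = (norm h)\<^sup>2 + 1" using b0 by (simp add: t_def)
  moreover have "0 \<le> (Re z)\<^sup>2 + (Im z)\<^sup>2" by simp
  ultimately show False by linarith
qed

lemma square_positive:
  fixes b :: "'a::cstar_algebra_1"
  assumes sa: "cstar b = b"
  shows "positive (b * b)"
  unfolding positive_def
proof (intro conjI)
  show "cstar (b * b) = b * b" by (simp add: cstar_mult sa)
next
  show "\<forall>z\<in>cspectrum (b * b). Im z = 0 \<and> 0 \<le> Re z"
  proof
  fix z assume z: "z \<in> cspectrum (b * b)"
  show "Im z = 0 \<and> 0 \<le> Re z"
  proof (rule ccontr)
    assume nz: "\<not> (Im z = 0 \<and> 0 \<le> Re z)"
    define m where "m = csqrt z"
    have mm: "m * m = z" by (simp add: m_def power2_eq_square[symmetric])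
    have im: "Im m \<noteq> 0"
    proof
      assume "Im m = 0"
      hence "Im z = 0 \<and> 0 \<le> Re z" using mm[symmetric] by (simp add: power2_eq_square[symmetric])
      thus False using nz by simp
    qed
    have i1: "invertible_elem (b - scaleC m 1)"
      using sa_spec_real[OF sa, of m] im unfolding cspectrum_def by blast
    have i2: "invertible_elem (b - scaleC (-m) 1)"
      using sa_spec_real[OF sa, of "-m"] im unfolding cspectrum_def by auto
    have "(b - scaleC m 1) * (b - scaleC (-m) 1) = b * b - scaleC z 1"
      by (simp add: left_diff_distrib right_diff_distrib scaleC_1_mult mult_scaleC_1 mult_scaleC_left
          scaleC_scaleC scaleC_minus_left scaleC_add_right scaleC_diff_right distrib_left mm[symmetric])
    hence "invertible_elem (b * b - scaleC z 1)" using inv_mult[OF i1 i2] by simp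
    thus False using z unfolding cspectrum_def by simp
  qed
  qed
qed


theorem lemma3p3:
  fixes x :: "'a::cstar_algebra_1"
  assumes "simple_alg TYPE('a)"
    and "\<not> finite_dim_alg TYPE('a)"
    and "\<not> purely_infinite TYPE('a)"
    and "positive x" and "x \<noteq> 0"
  shows "\<forall>\<epsilon>>0. \<exists>y\<in>hered x. positive y \<and> y \<noteq> 0 \<and>
           (\<forall>f. positive f \<and> positive (1 - f) \<and> cuntz_le (1 - f) y \<longrightarrow> norm f > 1 - \<epsilon>)"
proof -
  obtain a :: 'a where a0: "a \<noteq> 0" and na: "\<And>u w. u * a * w \<noteq> 1"
    using assms(2,3) unfolding purely_infinite_def by blast
  have xs: "cstar x = x" using assms(4) unfolding positive_def by blast
  obtain c where zc: "x * c * a \<noteq> 0"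
  proof (rule ccontr)
    assume "\<not> thesis"
    hence all0: "\<forall>c. x * c * a = 0" using that by blast
    define I where "I = {b::'a. \<forall>c. x * c * b = 0}"
    have cl: "closed {b::'a. x * c * b = 0}" for c
      by (intro closed_Collect_eq continuous_intros)
    have "I = (\<Inter>c. {b::'a. x * c * b = 0})" unfolding I_def by blast
    hence "closed I" using cl by (simp add: closed_INT)
    moreover have "closed_ideal I"
      unfolding closed_ideal_def
    proof (intro conjI ballI allI)
      show "closed I" by fact
      show "0 \<in> I" unfolding I_def by simp
    next
      fix u w assume "u \<in> I" "w \<in> I"
      thus "u + w \<in> I" unfolding I_def by (simp add: distrib_left)
    next
      fix k u assume "u \<in> I"
      thus "scaleC k u \<in> I" unfolding I_def by (simp add: mult_scaleC_right)
    next
      fix u e assume u: "u \<in> I"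
      have "x * k * (e * u) = 0" for k
      proof -
        have "x * (k * e) * u = 0" using u unfolding I_def by blast
        thus ?thesis by (simp add: mult.assoc)
      qed
      thus "e * u \<in> I" unfolding I_def by blast
      have "x * k * (u * e) = 0" for k
      proof -
        have "x * k * u = 0" using u unfolding I_def by blast
        hence "x * k * u * e = 0" by simp
        thus ?thesis by (simp add: mult.assoc)
      qed
      thus "u * e \<in> I" unfolding I_def by blast
    qed
    hence "I = {0} \<or> I = UNIV" using assms(1) unfolding simple_alg_def by blast
    moreover have "a \<in> I" using all0 unfolding I_def by simp
    ultimately have "1 \<in> I" using a0 by auto
    hence "x * 1 * 1 = 0" unfolding I_def by blast
    thus False using assms(5) by simp
  qed
  define z where "z = x * c * a"
  define b where "b = z * cstar z"
  define y where "y = b * b"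
  have cz: "cstar z = cstar a * cstar c * x"
    by (simp add: z_def cstar_mult xs mult.assoc)
  have bsa: "cstar b = b" by (simp add: b_def cstar_mult cstar_cstar)
  have posy: "positive y" unfolding y_def by (rule square_positive[OF bsa])
  have "cstar z \<noteq> 0" using zc by (simp add: cstar_eq_0 z_def)
  hence "norm (cstar z) \<noteq> 0" by simp
  have nb: "norm b = (norm (cstar z))\<^sup>2"
    using cstar_identity[of "cstar z"] by (simp add: b_def cstar_cstar)
  have "norm y = (norm b)\<^sup>2"
    using cstar_identity[of b] by (simp add: y_def bsa)
  moreover have "norm b \<noteq> 0" using nb \<open>norm (cstar z) \<noteq> 0\<close> by simp
  ultimately have "norm y \<noteq> 0" by simp
  hence y0: "y \<noteq> 0" by (metis norm_zero)
  define M where "M = c * a * cstar a * cstar c * x * x * c * a * cstar a * cstar c"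
  have yeq: "y = x * M * x"
    unfolding y_def b_def cz M_def unfolding z_def by (simp only: mult.assoc)
  have "y \<in> {x * m * x | m. True}"
    by (rule CollectI, rule exI[of _ M], rule conjI[OF yeq TrueI])
  hence yh: "y \<in> hered x" unfolding hered_def by (rule subsetD[OF closure_subset])
  have yfac: "y = x * c * a * (cstar a * cstar c * x * b)"
    unfolding y_def b_def cz unfolding z_def by (simp only: mult.assoc)
  show ?thesis
  proof (intro allI impI)
    fix \<epsilon> :: real assume ep: "\<epsilon> > 0"
    show "\<exists>y\<in>hered x. positive y \<and> y \<noteq> 0 \<and>
           (\<forall>f. positive f \<and> positive (1 - f) \<and> cuntz_le (1 - f) y \<longrightarrow> norm f > 1 - \<epsilon>)"
    proof (intro bexI[OF _ yh] conjI posy y0 allI impI)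
      fix f :: 'a
      assume H: "positive f \<and> positive (1 - f) \<and> cuntz_le (1 - f) y"
      show "norm f > 1 - \<epsilon>"
      proof (rule ccontr)
        assume "\<not> norm f > 1 - \<epsilon>"
        hence "norm f < 1" using ep by simp
        from neumann[OF this] obtain g where g: "(1 - f) * g = 1" "g * (1 - f) = 1" by blast
        from H obtain v where v: "(\<lambda>n. norm ((1 - f) - v n * y * cstar (v n))) \<longlonglongrightarrow> 0"
          unfolding cuntz_le_def by blast
        have gp: "0 < norm g + 1" using norm_ge_zero[of g] by linarith
        hence "0 < 1 / (norm g + 1)" by simp
        from order_tendstoD(2)[OF v this] obtain N where
          "\<forall>n\<ge>N. norm ((1 - f) - v n * y * cstar (v n)) < 1 / (norm g + 1)"
          unfolding eventually_sequentially by blast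
        then obtain n where
          nl: "norm ((1 - f) - v n * y * cstar (v n)) < 1 / (norm g + 1)" by blast
        define d where "d = g * ((1 - f) - v n * y * cstar (v n))"
        have "norm d \<le> norm g * norm ((1 - f) - v n * y * cstar (v n))"
          unfolding d_def by (rule norm_mult_ineq)
        also have "\<dots> \<le> norm g * (1 / (norm g + 1))"
          using nl by (intro mult_left_mono) auto
        also have "\<dots> < 1" using gp by (simp add: field_simps)
        finally have "norm d < 1" .
        from neumann[OF this] obtain s where s: "(1 - d) * s = 1" by blast
        have "1 - d = g * (v n * y * cstar (v n))"
          unfolding d_def right_diff_distrib[of g "1 - f"] g(2) by simp
        hence "(g * v n * x * c) * a * (cstar a * cstar c * x * b * cstar (v n) * s) = 1"
          using s yfac by (simp add: mult.assoc)
        thus False using na by blast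
      qed
    qed
  qed
qed

end
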